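(* Let $\mathbb{K}$ be an $\aleph_0$-complete field and $x=(x_1,\ldots,x_n)$. Let $F$ be a finite system of polynomial equations, with coefficients in $\mathbb{K}[\![x]\!]$, in unknowns $z_1,\ldots,z_q$ and some of their partial derivatives $\partial^{|j_1|}z_{i_1}/\partial x^{j_1},\ldots,\partial^{|j_s|}z_{i_s}/\partial x^{j_s}$, where $i_1,\ldots,i_s\in\{1,\ldots,q\}$ and $j_1,\ldots,j_s\in\mathbb{N}^n$. If $F=0$ has approximate solutions up to any order, i.e. for every $c\in\mathbb{N}$ there exists $z\in\mathbb{K}[\![x]\!]^q$ such that $F$ evaluated at $z$ and its corresponding partial derivatives lies in $(x)^c$, then $F=0$ has a solution $z\in\mathbb{K}[\![x]\!]^q$.
   Context: A field $\mathbb{K}$ is called $\aleph_0$-complete if every countable system $\mathcal S$ of polynomial equations with coefficients in $\mathbb{K}$ (in a countable number of indeterminates) has a solution in $\mathbb{K}$ if and only if every finite sub-system of $\mathcal S$ has a solution in $\mathbb{K}$. $(x)$ is the maximal ideal of $\mathbb{K}[\![x]\!]$; for $j=(j^1,\ldots,j^n)\in\mathbb{N}^n$, $|j|=j^1+\cdots+j^n$ and $\partial^{|j|}/\partial x^j$ denotes the formal partial derivative $\partial^{|j|}/\partial x_1^{j^1}\cdots\partial x_n^{j^n}$. *)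

theory Defs
  imports Main "HOL-Library.Poly_Mapping" "HOL-Library.Countable_Set"
begin

text \<open>A polynomial over 'k in countably many indeterminates X_0, X_1, ... is an element
of poly_mapping from monomials to k (monomial = finitely supported exponent vector).\<close>

type_synonym 'k cpoly = "(nat \<Rightarrow>\<^sub>0 nat) \<Rightarrow>\<^sub>0 'k"

definition cpoly_eval :: "'k::field cpoly \<Rightarrow> (nat \<Rightarrow> 'k) \<Rightarrow> 'k" where
  "cpoly_eval p a = (\<Sum>m\<in>Poly_Mapping.keys p. Poly_Mapping.lookup p m * (\<Prod>i\<in>Poly_Mapping.keys m. a i ^ Poly_Mapping.lookup m i))"

definition aleph0_complete :: "'k::field itself \<Rightarrow> bool" where
  "aleph0_complete _ \<longleftrightarrow>
     (\<forall>S :: 'k cpoly set. countable S \<longrightarrow>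
        ((\<exists>a. \<forall>p\<in>S. cpoly_eval p a = 0) \<longleftrightarrow>
         (\<forall>T\<subseteq>S. finite T \<longrightarrow> (\<exists>a. \<forall>p\<in>T. cpoly_eval p a = 0))))"

type_synonym ('n, 'k) pser = "('n \<Rightarrow> nat) \<Rightarrow> 'k"

definition ps_one :: "('n, 'k::field) pser" where
  "ps_one \<alpha> = (if \<alpha> = (\<lambda>_. 0) then 1 else 0)"

definition ps_mult :: "('n::finite, 'k::field) pser \<Rightarrow> ('n, 'k) pser \<Rightarrow> ('n, 'k) pser" where
  "ps_mult f g \<alpha> = (\<Sum>\<beta>\<in>{\<beta>. \<beta> \<le> \<alpha>}. f \<beta> * g (\<lambda>i. \<alpha> i - \<beta> i))"

definition ps_pow :: "('n::finite, 'k::field) pser \<Rightarrow> nat \<Rightarrow> ('n, 'k) pser" where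
  "ps_pow f k = (ps_mult f ^^ k) ps_one"

text \<open>Formal partial derivative d^{|j|}/dx^j: coefficient of x^\<alpha> in d^j f is
  f_{\<alpha>+j} * prod_i (\<alpha>_i + j_i)! / \<alpha>_i!.\<close>

definition ps_deriv :: "('n::finite \<Rightarrow> nat) \<Rightarrow> ('n, 'k::field) pser \<Rightarrow> ('n, 'k) pser" where
  "ps_deriv j f \<alpha> = of_nat (\<Prod>i\<in>UNIV. fact (\<alpha> i + j i) div fact (\<alpha> i)) * f (\<lambda>i. \<alpha> i + j i)"

definition in_max_ideal_pow :: "nat \<Rightarrow> ('n::finite, 'k::field) pser \<Rightarrow> bool" where
  "in_max_ideal_pow c f \<longleftrightarrow> (\<forall>\<alpha>. (\<Sum>i\<in>UNIV. \<alpha> i) < c \<longrightarrow> f \<alpha> = 0)"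

definition is_pspoly :: "nat \<Rightarrow> ((nat \<Rightarrow> nat) \<Rightarrow> ('n, 'k::zero) pser) \<Rightarrow> bool" where
  "is_pspoly s P \<longleftrightarrow> finite {m. P m \<noteq> (\<lambda>_. 0)} \<and>
     (\<forall>m. P m \<noteq> (\<lambda>_. 0) \<longrightarrow> (\<forall>k\<ge>s. m k = 0))"

definition ps_monom :: "nat \<Rightarrow> (nat \<Rightarrow> ('n::finite, 'k::field) pser) \<Rightarrow> (nat \<Rightarrow> nat) \<Rightarrow> ('n, 'k) pser" where
  "ps_monom s y m = foldr (\<lambda>k acc. ps_mult (ps_pow (y k) (m k)) acc) [0..<s] ps_one"

definition pspoly_eval :: "nat \<Rightarrow> ((nat \<Rightarrow> nat) \<Rightarrow> ('n::finite, 'k::field) pser)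
    \<Rightarrow> (nat \<Rightarrow> ('n, 'k) pser) \<Rightarrow> ('n, 'k) pser" where
  "pspoly_eval s P y = (\<lambda>\<alpha>. \<Sum>m\<in>{m. P m \<noteq> (\<lambda>_. 0)}. ps_mult (P m) (ps_monom s y m) \<alpha>)"

text \<open>The differential system: the k-th unknown (k < s) of each polynomial is substituted by
  d^{|der k|} z_{idx k} / dx^{der k}.\<close>

definition subst_derivs :: "(nat \<Rightarrow> nat) \<Rightarrow> (nat \<Rightarrow> ('n::finite \<Rightarrow> nat)) \<Rightarrow> (nat \<Rightarrow> ('n, 'k::field) pser)
    \<Rightarrow> nat \<Rightarrow> ('n, 'k) pser" where
  "subst_derivs idx der z k = ps_deriv (der k) (z (idx k))"

end

theory Submission
  imports Defs
begin

definition mon :: "(nat \<Rightarrow>\<^sub>0 nat) \<Rightarrow> (nat \<Rightarrow> 'k::field) \<Rightarrow> 'k" where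
  "mon m a = (\<Prod>i\<in>Poly_Mapping.keys m. a i ^ Poly_Mapping.lookup m i)"

lemma mon_superset:
  assumes "finite S" "Poly_Mapping.keys m \<subseteq> S"
  shows "mon m a = (\<Prod>i\<in>S. a i ^ Poly_Mapping.lookup m i)"
  unfolding mon_def
  by (rule prod.mono_neutral_left) (use assms in \<open>auto simp: in_keys_iff\<close>)

lemma mon_add: "mon (m + m') a = mon m a * mon m' a"
proof -
  let ?S = "Poly_Mapping.keys m \<union> Poly_Mapping.keys m'"
  have "mon (m + m') a = (\<Prod>i\<in>?S. a i ^ Poly_Mapping.lookup (m+m') i)"
    by (rule mon_superset) (auto dest: keys_add[THEN subsetD])
  also have "\<dots> = (\<Prod>i\<in>?S. a i ^ Poly_Mapping.lookup m i * a i ^ Poly_Mapping.lookup m' i)"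
    by (simp add: lookup_add power_add)
  also have "\<dots> = mon m a * mon m' a"
    by (simp add: prod.distrib mon_superset[of ?S])
  finally show ?thesis .
qed

lemma mon_zero: "mon 0 a = 1"
  by (simp add: mon_def)

lemma mon_var: "mon (Poly_Mapping.single i 1) a = a i"
  by (simp add: mon_def)

lemma mon_var': "mon (Poly_Mapping.single i (Suc 0)) a = a i"
  by (simp add: mon_def)

lemma cpoly_eval_superset:
  assumes "finite S" "Poly_Mapping.keys p \<subseteq> S"
  shows "cpoly_eval p a = (\<Sum>m\<in>S. Poly_Mapping.lookup p m * mon m a)"
  unfolding cpoly_eval_def mon_def[symmetric]
  by (rule sum.mono_neutral_left) (use assms in \<open>auto simp: in_keys_iff\<close>)

lemma cpoly_eval_add: "cpoly_eval (p + q) a = cpoly_eval p a + cpoly_eval q a"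
proof -
  let ?S = "Poly_Mapping.keys p \<union> Poly_Mapping.keys q"
  have "cpoly_eval (p + q) a = (\<Sum>m\<in>?S. Poly_Mapping.lookup (p+q) m * mon m a)"
    by (rule cpoly_eval_superset) (auto dest: keys_add[THEN subsetD])
  also have "\<dots> = cpoly_eval p a + cpoly_eval q a"
    by (simp add: lookup_add distrib_right sum.distrib cpoly_eval_superset[of ?S])
  finally show ?thesis .
qed

lemma cpoly_eval_zero: "cpoly_eval 0 a = 0"
  by (simp add: cpoly_eval_def)

lemma cpoly_eval_single: "cpoly_eval (Poly_Mapping.single m c) a = c * mon m a"
  by (subst cpoly_eval_superset[of "{m}"]) auto

definition leval :: "((nat \<Rightarrow>\<^sub>0 nat) \<times> 'k::field) list \<Rightarrow> (nat \<Rightarrow> 'k) \<Rightarrow> 'k" where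
  "leval L a = sum_list (map (\<lambda>(m,c). c * mon m a) L)"

definition to_cpoly :: "((nat \<Rightarrow>\<^sub>0 nat) \<times> 'k::field) list \<Rightarrow> 'k cpoly" where
  "to_cpoly L = sum_list (map (\<lambda>(m,c). Poly_Mapping.single m c) L)"

lemma to_cpoly_eval: "cpoly_eval (to_cpoly L) a = leval L a"
  by (induction L) (auto simp: to_cpoly_def leval_def cpoly_eval_zero cpoly_eval_add cpoly_eval_single)

definition PF :: "((nat \<Rightarrow> 'k::field) \<Rightarrow> 'k) \<Rightarrow> bool" where
  "PF G \<longleftrightarrow> (\<exists>L. \<forall>a. G a = leval L a)"

lemma PF_cpoly: "PF G \<Longrightarrow> \<exists>p. \<forall>a. G a = cpoly_eval p a"
proof -
  assume "PF G"
  then obtain L where "\<forall>a. G a = leval L a" unfolding PF_def by blast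
  then show ?thesis by (intro exI[of _ "to_cpoly L"]) (simp add: to_cpoly_eval)
qed

lemma PF_const: "PF (\<lambda>a. c)"
  unfolding PF_def by (rule exI[of _ "[(0,c)]"]) (simp add: leval_def mon_zero)

lemma PF_var: "PF (\<lambda>a. a i)"
  unfolding PF_def by (rule exI[of _ "[(Poly_Mapping.single i 1,1)]"]) (simp add: leval_def mon_var')

lemma PF_add: "PF G \<Longrightarrow> PF H \<Longrightarrow> PF (\<lambda>a. G a + H a)"
proof -
  assume "PF G" "PF H"
  then obtain L L' where "\<forall>a. G a = leval L a" "\<forall>a. H a = leval L' a" unfolding PF_def by blast
  then show ?thesis unfolding PF_def by (intro exI[of _ "L @ L'"]) (simp add: leval_def)
qed

lemma leval_mult:
  "leval (concat (map (\<lambda>(m,c). map (\<lambda>(m',c'). (m+m', c*c')) L') L)) a = leval L a * leval L' a"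
proof (induction L)
  case Nil
  then show ?case by (simp add: leval_def)
next
  case (Cons x L)
  obtain m c where x: "x = (m,c)" by force
  have "leval (map (\<lambda>(m',c'). (m+m', c*c')) L') a = c * mon m a * leval L' a"
    by (induction L') (auto simp: leval_def mon_add algebra_simps)
  then show ?case using Cons
    by (simp add: x leval_def algebra_simps)
qed

lemma PF_mult: "PF G \<Longrightarrow> PF H \<Longrightarrow> PF (\<lambda>a. G a * H a)"
proof -
  assume "PF G" "PF H"
  then obtain L L' where "\<forall>a. G a = leval L a" "\<forall>a. H a = leval L' a" unfolding PF_def by blast
  then show ?thesis unfolding PF_def
    by (intro exI[of _ "concat (map (\<lambda>(m,c). map (\<lambda>(m',c'). (m+m', c*c')) L') L)"]) (simp add: leval_mult)
qed

lemma PF_sum_fin: "finite A \<Longrightarrow> (\<forall>x\<in>A. PF (f x)) \<longrightarrow> PF (\<lambda>a. \<Sum>x\<in>A. f x a)"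
  by (induction A rule: finite_induct) (auto intro: PF_add PF_const)

lemma PF_sum: "(\<And>x. x \<in> A \<Longrightarrow> PF (f x)) \<Longrightarrow> PF (\<lambda>a. \<Sum>x\<in>A. f x a)"
  using PF_sum_fin[of A f] by (cases "finite A") (auto simp: PF_const)

definition PPS :: "((nat \<Rightarrow> 'k::field) \<Rightarrow> ('n, 'k) pser) \<Rightarrow> bool" where
  "PPS Y \<longleftrightarrow> (\<forall>\<alpha>. PF (\<lambda>a. Y a \<alpha>))"

lemma PPS_const: "PPS (\<lambda>a. f)"
  by (simp add: PPS_def PF_const)

lemma PPS_mult: "PPS Y \<Longrightarrow> PPS Y' \<Longrightarrow> PPS (\<lambda>a. ps_mult (Y a) (Y' a))"
  unfolding PPS_def ps_mult_def by (auto intro!: PF_sum PF_mult)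

lemma PPS_pow: "PPS Y \<Longrightarrow> PPS (\<lambda>a. ps_pow (Y a) k)"
proof (induction k)
  case 0
  then show ?case by (simp add: ps_pow_def PPS_const)
next
  case (Suc k)
  then have "PPS (\<lambda>a. ps_mult (Y a) (ps_pow (Y a) k))" by (intro PPS_mult)
  then show ?case by (simp add: ps_pow_def)
qed

lemma PPS_foldr:
  assumes "\<And>k. PPS (\<lambda>a. y a k)"
  shows "PPS (\<lambda>a. foldr (\<lambda>k acc. ps_mult (ps_pow (y a k) (m k)) acc) xs ps_one)"
proof (induction xs)
  case Nil
  then show ?case by (simp add: PPS_const)
next
  case (Cons x xs)
  then show ?case by (simp add: PPS_mult PPS_pow assms)
qed

lemma PPS_monom:
  "(\<And>k. PPS (\<lambda>a. y a k)) \<Longrightarrow> PPS (\<lambda>a. ps_monom s (y a) m)"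
  unfolding ps_monom_def by (rule PPS_foldr)

lemma PPS_eval:
  "(\<And>k. PPS (\<lambda>a. y a k)) \<Longrightarrow> PPS (\<lambda>a. pspoly_eval s P (y a))"
proof -
  assume h: "\<And>k. PPS (\<lambda>a. y a k)"
  have "\<And>m. PPS (\<lambda>a. ps_mult (P m) (ps_monom s (y a) m))"
    by (intro PPS_mult PPS_const PPS_monom h)
  then show ?thesis by (auto simp: PPS_def pspoly_eval_def intro!: PF_sum)
qed

lemma PPS_deriv: "PPS Y \<Longrightarrow> PPS (\<lambda>a. ps_deriv j (Y a))"
  unfolding PPS_def ps_deriv_def by (auto intro!: PF_mult PF_const)

definition Zof :: "(nat \<Rightarrow> 'k::field) \<Rightarrow> nat \<Rightarrow> ('n::finite, 'k) pser" where
  "Zof a i = (\<lambda>\<beta>. a (to_nat (i, \<beta>)))"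

lemma PPS_Z: "PPS (\<lambda>a. Zof a i)"
  by (simp add: PPS_def Zof_def PF_var)

lemma PPS_G: "PPS (\<lambda>a. pspoly_eval s P (subst_derivs idx der (Zof a)))"
  unfolding subst_derivs_def by (intro PPS_eval PPS_deriv PPS_Z)

lemma Zof_from:
  fixes z :: "nat \<Rightarrow> ('n::finite, 'k::field) pser"
  shows "Zof (\<lambda>n. z (fst (from_nat n :: nat \<times> ('n \<Rightarrow> nat))) (snd (from_nat n :: nat \<times> ('n \<Rightarrow> nat)))) = z"
proof (intro ext)
  fix i and \<beta> :: "'n \<Rightarrow> nat"
  have h: "(from_nat (to_nat (i, \<beta>)) :: nat \<times> ('n \<Rightarrow> nat)) = (i, \<beta>)"
    by (rule from_nat_to_nat)
  show "Zof (\<lambda>n. z (fst (from_nat n :: nat \<times> ('n \<Rightarrow> nat))) (snd (from_nat n :: nat \<times> ('n \<Rightarrow> nat)))) i \<beta> = z i \<beta>"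
    by (simp only: Zof_def h fst_conv snd_conv)
qed

theorem corollary4p1:
  fixes F :: "nat \<Rightarrow> (nat \<Rightarrow> nat) \<Rightarrow> ('n::finite, 'k::field) pser"
    and r q s :: nat
    and idx :: "nat \<Rightarrow> nat"
    and der :: "nat \<Rightarrow> ('n \<Rightarrow> nat)"
  assumes K: "aleph0_complete TYPE('k)"
    and F: "\<forall>e<r. is_pspoly s (F e)"
    and idx: "\<forall>k<s. idx k < q"
    and approx: "\<forall>c. \<exists>z :: nat \<Rightarrow> ('n, 'k) pser.
                   \<forall>e<r. in_max_ideal_pow c (pspoly_eval s (F e) (subst_derivs idx der z))"
  shows "\<exists>z :: nat \<Rightarrow> ('n, 'k) pser.
           \<forall>e<r. pspoly_eval s (F e) (subst_derivs idx der z) = (\<lambda>_. 0)"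
proof -
  define G where "G e \<alpha> a = pspoly_eval s (F e) (subst_derivs idx der (Zof a)) \<alpha>"
    for e and \<alpha> :: "'n \<Rightarrow> nat" and a :: "nat \<Rightarrow> 'k"
  have "\<forall>e \<alpha>. \<exists>p. \<forall>a. G e \<alpha> a = cpoly_eval p a"
  proof (intro allI)
    fix e \<alpha>
    have "PF (\<lambda>a. G e \<alpha> a)" using PPS_G unfolding G_def PPS_def by blast
    then show "\<exists>p. \<forall>a. G e \<alpha> a = cpoly_eval p a" by (rule PF_cpoly)
  qed
  define P where "P e \<alpha> = (SOME p. \<forall>a. G e \<alpha> a = cpoly_eval p a)" for e \<alpha>
  have P: "G e \<alpha> a = cpoly_eval (P e \<alpha>) a" for e \<alpha> a
  proof -
    have "\<exists>p. \<forall>a. G e \<alpha> a = cpoly_eval p a" using \<open>\<forall>e \<alpha>. _\<close> by blast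
    then have "\<forall>a. G e \<alpha> a = cpoly_eval (P e \<alpha>) a" unfolding P_def by (rule someI_ex)
    then show ?thesis by blast
  qed
  define I where "I = {..<r} \<times> (UNIV :: ('n \<Rightarrow> nat) set)"
  define S where "S = (\<lambda>(e,\<alpha>). P e \<alpha>) ` I"
  have cS: "countable S"
    unfolding S_def I_def by (intro countable_image countable_SIGMA) auto
  have fin: "\<exists>a. \<forall>p\<in>T. cpoly_eval p a = 0" if T: "T \<subseteq> S" "finite T" for T
  proof -
    obtain C where C: "C \<subseteq> I" "finite C" "T = (\<lambda>(e,\<alpha>). P e \<alpha>) ` C"
      using finite_subset_image[OF T(2) T(1)[unfolded S_def]] by blast
    define c where "c = Suc (\<Sum>x\<in>C. (\<Sum>i\<in>UNIV. snd x i))"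
    obtain z :: "nat \<Rightarrow> ('n, 'k) pser" where
      z: "\<forall>e<r. in_max_ideal_pow c (pspoly_eval s (F e) (subst_derivs idx der z))"
      using approx by blast
    define a :: "nat \<Rightarrow> 'k" where "a n = z (fst (from_nat n :: nat \<times> ('n \<Rightarrow> nat))) (snd (from_nat n :: nat \<times> ('n \<Rightarrow> nat)))" for n
    have Za: "Zof a = z" unfolding a_def by (rule Zof_from)
    have "cpoly_eval (P e \<alpha>) a = 0" if "(e,\<alpha>) \<in> C" for e \<alpha>
    proof -
      have "e < r" using that C(1) by (auto simp: I_def)
      have "(\<Sum>i\<in>UNIV. snd (e,\<alpha>) i) \<le> (\<Sum>x\<in>C. (\<Sum>i\<in>UNIV. snd x i))"
        by (rule member_le_sum) (use that C(2) in auto)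
      then have "(\<Sum>i\<in>UNIV. \<alpha> i) < c" by (simp add: c_def)
      then have "G e \<alpha> a = 0"
        using z \<open>e < r\<close> by (simp add: G_def Za in_max_ideal_pow_def)
      then show ?thesis by (simp add: P)
    qed
    then show ?thesis using C(3) by (intro exI[of _ a]) auto
  qed
  have K': "countable S \<longrightarrow> ((\<exists>a. \<forall>p\<in>S. cpoly_eval p a = 0) \<longleftrightarrow>
         (\<forall>T\<subseteq>S. finite T \<longrightarrow> (\<exists>a. \<forall>p\<in>T. cpoly_eval p a = 0)))"
    using K unfolding aleph0_complete_def by (rule spec)
  have "\<forall>T\<subseteq>S. finite T \<longrightarrow> (\<exists>a. \<forall>p\<in>T. cpoly_eval p a = 0)"
    using fin by blast
  then obtain a where a: "\<forall>p\<in>S. cpoly_eval p a = 0"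
    using K' cS by blast
  show ?thesis
  proof (intro exI allI impI ext)
    fix e \<alpha> assume "e < r"
    then have "P e \<alpha> \<in> S" by (force simp: S_def I_def)
    then have "G e \<alpha> a = 0" using a by (simp add: P)
    then show "pspoly_eval s (F e) (subst_derivs idx der (Zof a)) \<alpha> = 0"
      by (simp add: G_def)
  qed
qed

end
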